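(* Let $0\le\lambda<\gamma\le\delta$. If $F\in\mathcal{R}(\gamma,\delta,\lambda)$, then $\mathrm{Re}\left\{\frac{F(z)}{z}\right\}>\frac12$ for all $z\in\mathcal{U}$.
   Context: Let $\mathcal{U}=\{z\in\mathbb{C}:|z|<1\}$ and let $\mathcal{A}$ be the class of analytic functions $F$ in $\mathcal{U}$ with $F(0)=0$, $F'(0)=1$. For real $0\le\lambda<\gamma\le\delta$, $\mathcal{R}(\gamma,\delta,\lambda)$ is the class of $F\in\mathcal{A}$ such that $\mathrm{Re}\{\gamma F'(z)+\delta zF''(z)+\frac{\delta-\gamma}{2}z^2F'''(z)\}>\lambda$ for all $z\in\mathcal{U}$. Here $F(z)/z$ at $z=0$ means its limiting value $1$. *)

theory Defs
  imports "HOL-Complex_Analysis.Complex_Analysis"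
begin

definition unit_disc :: "complex set" where
  "unit_disc = ball 0 1"

definition class_A :: "(complex \<Rightarrow> complex) set" where
  "class_A = {F. F holomorphic_on unit_disc \<and> F 0 = 0 \<and> deriv F 0 = 1}"

definition class_R :: "real \<Rightarrow> real \<Rightarrow> real \<Rightarrow> (complex \<Rightarrow> complex) set" where
  "class_R gam del lam = {F \<in> class_A. \<forall>z\<in>unit_disc.
      Re (of_real gam * deriv F z + of_real del * z * (deriv ^^ 2) F z
          + of_real ((del - gam) / 2) * z^2 * (deriv ^^ 3) F z) > lam}"

end

theory Submission
  imports Defs
begin

lemma re_real_deriv:
  assumes "(P has_field_derivative P') (at (complex_of_real t))"
  shows "((\<lambda>s. Re (P (complex_of_real s))) has_real_derivative Re P') (at t)"
proof -
  have "(complex_of_real has_vector_derivative 1) (at t)"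
    using has_vector_derivative_real_field[of "\<lambda>x. x" 1 t] 
    by (auto intro!: derivative_eq_intros)
  from field_vector_diff_chain_at[OF this assms]
  have "((P \<circ> complex_of_real) has_vector_derivative P') (at t)" by simp
  from has_field_derivative_Re[OF this] show ?thesis by (simp add: o_def)
qed

lemma harnack_aux:
  fixes q :: complex and r :: real
  assumes "Re q > 0" "cmod (q - 1) \<le> r * cmod (q + 1)" "0 \<le> r" "r < 1"
  shows "Re q \<ge> 1 - 2 * r"
proof -
  define u where "u = Re q"
  define v where "v = Im q"
  have "(cmod (q - 1))^2 \<le> (r * cmod (q + 1))^2"
    using assms by (intro power_mono) auto
  hence A: "(u-1)^2 + v^2 \<le> r^2 * ((u+1)^2 + v^2)"
    unfolding u_def v_def by (simp add: cmod_def power_mult_distrib)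
  have "r^2 * v^2 \<le> v^2" using assms by (intro mult_left_le_one_le) (auto simp: power_le_one)
  moreover have "(r*(u+1))^2 = r^2*(u+1)^2" by (simp add: power_mult_distrib)
  ultimately have "(u-1)^2 \<le> (r*(u+1))^2" using A by (simp only: distrib_left)
  hence "\<bar>u-1\<bar> \<le> \<bar>r*(u+1)\<bar>" using power2_le_imp_le[of "\<bar>u-1\<bar>" "\<bar>r*(u+1)\<bar>"] by simp
  moreover have "u > 0" using assms u_def by simp
  ultimately have "1 - u \<le> r*u + r" using assms by (simp add: abs_mult algebra_simps)
  hence "u \<ge> (1 - r)/(1+r)" using assms by (simp add: field_simps)
  moreover have "(1 - r)/(1+r) \<ge> 1 - 2*r" using assms by (simp add: field_simps)
  ultimately show ?thesis unfolding u_def by linarith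
qed

lemma ray_chain:
  assumes "(f has_field_derivative f') (at (c * z))"
  shows "((\<lambda>\<zeta>. f (\<zeta> * z)) has_field_derivative f' * z) (at c)"
proof -
  have "((\<lambda>\<zeta>. \<zeta> * z) has_field_derivative z) (at c)" by (auto intro!: derivative_eq_intros)
  from DERIV_chain2[OF assms this] show ?thesis .
qed

theorem lemma14:
  fixes gam del lam :: real and F :: "complex \<Rightarrow> complex"
  assumes "0 \<le> lam" and "lam < gam" and "gam \<le> del"
    and "F \<in> class_R gam del lam"
  shows "\<forall>z\<in>unit_disc. Re (if z = 0 then 1 else F z / z) > 1/2"
proof -
  define S where "S = ball (0::complex) 1"
  define F1 where "F1 = deriv F"
  define F2 where "F2 = deriv F1"
  define F3 where "F3 = deriv F2"
  have d2: "(deriv ^^ 2) F = F2" by (simp add: F2_def F1_def numeral_2_eq_2)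
  have d3: "(deriv ^^ 3) F = F3" by (simp add: F3_def F2_def F1_def numeral_3_eq_3)
  have FA: "F holomorphic_on S" "F 0 = 0" "F1 0 = 1"
    using assms(4) unfolding class_R_def class_A_def unit_disc_def S_def F1_def by auto
  have cond: "\<And>z. z \<in> S \<Longrightarrow> Re (of_real gam * F1 z + of_real del * z * F2 z
          + of_real ((del - gam) / 2) * z^2 * F3 z) > lam"
    using assms(4) unfolding class_R_def unit_disc_def S_def F1_def by (auto simp: d2 d3)
  have oS: "open S" by (simp add: S_def)
  have h1: "F1 holomorphic_on S" by (simp add: F1_def holomorphic_deriv FA oS)
  have h2: "F2 holomorphic_on S" by (simp add: F2_def holomorphic_deriv h1 oS)
  have D0: "\<And>w. w \<in> S \<Longrightarrow> (F has_field_derivative F1 w) (at w)"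
    using holomorphic_derivI[OF FA(1) oS] F1_def by blast
  have D1: "\<And>w. w \<in> S \<Longrightarrow> (F1 has_field_derivative F2 w) (at w)"
    using holomorphic_derivI[OF h1 oS] F2_def by blast
  have D2: "\<And>w. w \<in> S \<Longrightarrow> (F2 has_field_derivative F3 w) (at w)"
    using holomorphic_derivI[OF h2 oS] F3_def by blast
  define q where "q w = F1 w + w * F2 w" for w
  define q' where "q' w = 2 * F2 w + w * F3 w" for w
  have Dq: "(q has_field_derivative q' w) (at w)" if "w \<in> S" for w
  proof -
    have "((\<lambda>w. F1 w + w * F2 w) has_field_derivative (F2 w + (1 * F2 w + w * F3 w))) (at w)"
      using D1[OF that] D2[OF that] by (auto intro!: derivative_eq_intros)
    thus ?thesis unfolding q_def[abs_def] q'_def by (simp add: algebra_simps)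
  qed
  have hq: "q holomorphic_on S" unfolding q_def[abs_def] by (intro holomorphic_intros h1 h2)
  have q0: "q 0 = 1" using FA by (simp add: q_def)
  have Gq: "of_real gam * F1 w + of_real del * w * F2 w + of_real ((del - gam) / 2) * w^2 * F3 w
      = of_real gam * q w + of_real ((del - gam) / 2) * w * q' w" for w
    by (simp add: q_def q'_def field_simps power2_eq_square) 
  have inS: "complex_of_real t * z \<in> S" if "z \<in> S" "0 \<le> t" "t \<le> 1" for z t
  proof -
    have "cmod (complex_of_real t * z) = t * cmod z" using that by (simp add: norm_mult)
    also have "\<dots> \<le> cmod z" using that by (simp add: mult_left_le_one_le)
    finally show ?thesis using that by (simp add: S_def)
  qed
  have qpos: "Re (q z) > 0" if zS: "z \<in> S" for z
  proof (cases "del = gam")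
    case True
    have "lam < Re (of_real gam * q z + of_real ((del-gam)/2) * z * q' z)"
      using cond[OF zS] by (simp only: Gq)
    hence "lam < Re (of_real gam * q z)" using True by simp
    hence "0 < gam * Re (q z)" using assms by simp
    thus ?thesis using assms by (simp add: zero_less_mult_iff)
  next
    case False
    define nu where "nu = (del - gam) / 2"
    have nu: "nu > 0" using False assms by (simp add: nu_def)
    define a where "a = gam / nu"
    have a: "a > 0" using nu assms by (simp add: a_def)
    define Phi where "Phi t = t powr a * Re (q (complex_of_real t * z))" for t
    have Dre: "((\<lambda>t. Re (q (complex_of_real t * z))) has_real_derivative Re (q' (complex_of_real t * z) * z)) (at t)"
      if "0 \<le> t" "t \<le> 1" for t
      using re_real_deriv[OF ray_chain[OF Dq[OF inS[OF zS that]]]] by simp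
    have "Phi 0 < Phi 1"
    proof (rule DERIV_pos_imp_increasing_open[of 0 1 Phi])
      fix t :: real assume t: "0 < t" "t < 1"
      define w where "w = complex_of_real t * z"
      have wS: "w \<in> S" using inS[OF zS] t by (simp add: w_def)
      have "(Phi has_real_derivative (a * t powr (a - 1) * Re (q w) + Re (q' w * z) * t powr a)) (at t)"
        unfolding Phi_def[abs_def] w_def
        by (rule DERIV_mult[OF has_real_derivative_powr[OF t(1)] Dre]) (use t in auto)
      moreover have "a * t powr (a - 1) * Re (q w) + Re (q' w * z) * t powr a > 0"
      proof -
        have tp: "t powr a = t powr (a - 1) * t" using t by (simp add: powr_diff)
        have "Re (of_real gam * q w + of_real nu * w * q' w) > lam"
          using cond[OF wS] by (simp only: Gq nu_def)
        hence "gam * Re (q w) + nu * t * Re (q' w * z) > 0"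
          using assms by (simp add: w_def algebra_simps)
        hence "a * Re (q w) + t * Re (q' w * z) > 0"
          using nu by (simp add: a_def field_simps)
        moreover have "a * t powr (a - 1) * Re (q w) + Re (q' w * z) * t powr a
           = t powr (a-1) * (a * Re (q w) + t * Re (q' w * z))" unfolding tp by (simp add: algebra_simps)
        ultimately show ?thesis using t by simp
      qed
      ultimately show "\<exists>y. (Phi has_real_derivative y) (at t) \<and> y > 0" by blast
    next
      show "continuous_on {0..1} Phi"
        unfolding Phi_def[abs_def]
      proof (intro continuous_on_mult continuous_on_powr')
        show "continuous_on {0..1} (\<lambda>t. Re (q (complex_of_real t * z)))"
          using Dre by (intro continuous_at_imp_continuous_on ballI DERIV_isCont) auto
      qed (use a in \<open>auto intro!: continuous_intros\<close>)
    qed simp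
    thus ?thesis by (simp add: Phi_def)
  qed
  have harn: "Re (q w) \<ge> 1 - 2 * cmod w" if wS: "w \<in> S" for w
  proof -
    define om where "om x = (q x - 1) / (q x + 1)" for x
    have qn: "q x + 1 \<noteq> 0" if "x \<in> S" for x
    proof
      assume "q x + 1 = 0"
      hence "Re (q x + 1) = 0" by simp
      hence "Re (q x) = -1" by simp
      with qpos[OF that] show False by simp
    qed
    have lt: "cmod (q x - 1) < cmod (q x + 1)" if "x \<in> S" for x
    proof -
      have e1: "(cmod (q x - 1))^2 = (Re (q x) - 1)^2 + (Im (q x))^2" by (simp add: cmod_power2)
      have e2: "(cmod (q x + 1))^2 = (Re (q x) + 1)^2 + (Im (q x))^2" by (simp add: cmod_power2)
      have "(cmod (q x - 1))^2 < (cmod (q x + 1))^2"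
        using qpos[OF that] unfolding e1 e2 by (simp add: power2_eq_square algebra_simps)
      thus ?thesis using power2_less_imp_less norm_ge_zero by blast
    qed
    have hom: "om holomorphic_on ball 0 1" unfolding om_def[abs_def] S_def[symmetric]
      by (intro holomorphic_intros hq) (use qn in auto)
    have om0: "om 0 = 0" by (simp add: om_def q0)
    have omn: "norm (om x) < 1" if "norm x < 1" for x
    proof -
      have xS: "x \<in> S" using that by (simp add: S_def)
      show ?thesis using lt[OF xS] qn[OF xS] by (simp add: om_def norm_divide divide_less_eq_1)
    qed
    have wn: "norm w < 1" using wS by (simp add: S_def)
    have "norm (om w) \<le> norm w" using Schwarz_Lemma(1)[OF hom om0 omn wn] .
    hence "cmod (q w - 1) / cmod (q w + 1) \<le> cmod w" by (simp add: om_def norm_divide)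
    hence "cmod (q w - 1) \<le> cmod w * cmod (q w + 1)"
      using qn[OF wS] by (simp add: pos_divide_le_eq)
    thus ?thesis using harnack_aux[OF qpos[OF wS] _ norm_ge_zero wn] by simp
  qed
  have d1: "Re (F1 z) \<ge> 1 - cmod z" if zS: "z \<in> S" for z
  proof -
    define r where "r = cmod z"
    define psi where "psi t = Re (complex_of_real t * F1 (complex_of_real t * z)) - (t - r * t^2)" for t
    have "psi 0 \<le> psi 1"
    proof (rule DERIV_nonneg_imp_nondecreasing[of 0 1 psi])
      fix t :: real assume t: "0 \<le> t" "t \<le> 1"
      define w where "w = complex_of_real t * z"
      have wS: "w \<in> S" using inS[OF zS t] by (simp add: w_def)
      have P0: "((\<lambda>\<zeta>. \<zeta> * F1 (\<zeta> * z)) has_field_derivative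
          (1 * F1 (complex_of_real t * z) + (F2 w * z) * complex_of_real t)) (at (complex_of_real t))"
        using DERIV_mult[OF DERIV_ident ray_chain[OF D1[OF wS[unfolded w_def]]]] unfolding w_def .
      have eq: "1 * F1 (complex_of_real t * z) + (F2 w * z) * complex_of_real t = q w"
        by (simp add: q_def w_def algebra_simps)
      have P: "((\<lambda>s. Re (complex_of_real s * F1 (complex_of_real s * z))) has_real_derivative Re (q w)) (at t)"
        using re_real_deriv[OF P0[unfolded eq]] .
      have "(psi has_real_derivative (Re (q w) - (1 - r * (2 * t)))) (at t)"
        unfolding psi_def[abs_def]
        by (rule DERIV_diff[OF P]) (auto intro!: derivative_eq_intros)
      moreover have "Re (q w) - (1 - r * (2 * t)) \<ge> 0"
      proof -
        have "cmod w = t * r" using t by (simp add: w_def r_def norm_mult)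
        thus ?thesis using harn[OF wS] by (simp add: algebra_simps)
      qed
      ultimately show "\<exists>y. (psi has_real_derivative y) (at t) \<and> y \<ge> 0" by blast
    qed simp
    thus ?thesis by (simp add: psi_def r_def)
  qed
  show ?thesis
  proof
    fix z assume zU: "z \<in> unit_disc"
    hence zS: "z \<in> S" by (simp add: S_def unit_disc_def)
    show "Re (if z = 0 then 1 else F z / z) > 1/2"
    proof (cases "z = 0")
      case True thus ?thesis by simp
    next
      case False
      define r where "r = cmod z"
      have r1: "r < 1" using zS by (simp add: r_def S_def)
      define chi where "chi t = Re (F (complex_of_real t * z) / z) - (t - r * t^2 / 2)" for t
      have "chi 0 \<le> chi 1"
      proof (rule DERIV_nonneg_imp_nondecreasing[of 0 1 chi])
        fix t :: real assume t: "0 \<le> t" "t \<le> 1"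
        define w where "w = complex_of_real t * z"
        have wS: "w \<in> S" using inS[OF zS t] by (simp add: w_def)
        have P0: "((\<lambda>\<zeta>. F (\<zeta> * z) / z) has_field_derivative (F1 w * z / z)) (at (complex_of_real t))"
          using DERIV_cdivide[OF ray_chain[OF D0[OF wS[unfolded w_def]]]] unfolding w_def .
        have eq: "F1 w * z / z = F1 w" using False by simp
        have P: "((\<lambda>s. Re (F (complex_of_real s * z) / z)) has_real_derivative Re (F1 w)) (at t)"
          using re_real_deriv[OF P0[unfolded eq]] .
        have "(chi has_real_derivative (Re (F1 w) - (1 - r * (2 * t) / 2))) (at t)"
          unfolding chi_def[abs_def]
          by (rule DERIV_diff[OF P]) (auto intro!: derivative_eq_intros)
        moreover have "Re (F1 w) - (1 - r * (2 * t) / 2) \<ge> 0"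
        proof -
          have "cmod w = t * r" using t by (simp add: w_def r_def norm_mult)
          thus ?thesis using d1[OF wS] by (simp add: algebra_simps)
        qed
        ultimately show "\<exists>y. (chi has_real_derivative y) (at t) \<and> y \<ge> 0" by blast
      qed simp
      hence "Re (F z / z) \<ge> 1 - r / 2" using FA(2) by (simp add: chi_def)
      thus ?thesis using False r1 by simp
    qed
  qed
qed

end
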